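(* Let $\mathcal{G}=(\mathcal{V},\mathcal{E})$ be a connected non-bipartite graph with node set $\mathcal{V}=\{1,\dots,N\}$, and let $\tilde{\mathcal{G}}=(\tilde{\mathcal{V}},\tilde{\mathcal{E}})$ be $\mathcal{G}$ with a self-loop added at every node, with adjacency matrix $\tilde A$ and diagonal degree matrix $\tilde D$. For $u\in\mathcal{V}$ let $\mathcal{N}(u)$ be the set of neighbours of $u$ in $\tilde{\mathcal{G}}$ and $\deg(u)=|\mathcal{N}(u)|$ (so $\tilde D=\operatorname{diag}(\deg(1),\dots,\deg(N))$). Random environment: let $\vec\xi=(\Theta^{(1)},\Theta^{(2)},\dots)$ be a sequence of independent, identically distributed random $\{0,1\}^{N\times N}$ matrices with entries $\theta^{(l)}(u,v)$, where $\theta^{(l)}(u,v)=0$ if $(u,v)\notin\tilde{\mathcal{E}}$, and for $(u,v)\in\tilde{\mathcal{E}}$, $\theta^{(l)}(u,v)$ is Bernoulli with $\mathbf P(\theta^{(l)}(u,v)=0)=\frac{1}{|\mathcal{E}|}$, $\mathbf P(\theta^{(l)}(u,v)=1)=1-\frac{1}{|\mathcal{E}|}$; for each $u$ the variables $\theta^{(l)}(u,v)$, $v\in\mathcal{N}(u)$, are independent. Let $\zeta^{(l)}_u=\sum_{v\in\mathcal{N}(u)}\theta^{(l)}(u,v)$ (so $\zeta^{(l)}_u$ is Binomial$(\deg(u),1-\frac1{|\mathcal{E}|})$), and define the random transition matrix $P(\Theta^{(l)})$ by $p(\Theta^{(l)};u,v)=\theta^{(l)}(u,v)/\zeta^{(l)}_u$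 when $\zeta^{(l)}_u>0$, and $p(\Theta^{(l)};u,\cdot)=\delta_u$ (the walk stays at $u$) when $\zeta^{(l)}_u=0$. Let $\vec V=(V_0,V_1,\dots)$ be a $\mathcal{V}$-valued process such that $(\vec V,\vec\xi)$ is a Markov chain in a random environment, i.e. for all $l\ge 1$ and $v_0,\dots,v_l\in\mathcal{V}$, $\mathbf P(V_l=v_l\mid V_0=v_0,\dots,V_{l-1}=v_{l-1},\vec\xi)=p(\Theta^{(l)};v_{l-1},v_l)$. Then, under the law $\mathbf P$ (averaging over the environment), $\vec V$ is a time-homogeneous Markov chain with transition matrix $$P_{\mathrm{drop}}=(I-\Gamma)\tilde D^{-1}\tilde A+\Gamma,\qquad \Gamma=\operatorname{diag}\Big(\tfrac{1}{|\mathcal{E}|^{\deg(1)}},\dots,\tfrac{1}{|\mathcal{E}|^{\deg(N)}}\Big).$$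
   Context: This models the DropEdge method applied to GCN: at each layer every edge of $\tilde{\mathcal G}$ is independently dropped, and message passing uses the row-normalized dropped adjacency matrix. $|\mathcal{E}|$ is the number of edges of $\mathcal{G}$. *)

theory Defs
  imports "HOL-Probability.Probability"
begin

definition simple_graph :: "nat \<Rightarrow> nat set set \<Rightarrow> bool" where
  "simple_graph N E \<longleftrightarrow> (\<forall>e\<in>E. card e = 2 \<and> e \<subseteq> {1..N})"

definition adj :: "nat set set \<Rightarrow> nat \<Rightarrow> nat \<Rightarrow> bool" where
  "adj E u v \<longleftrightarrow> u \<noteq> v \<and> {u, v} \<in> E"

definition connected_graph :: "nat \<Rightarrow> nat set set \<Rightarrow> bool" where
  "connected_graph N E \<longleftrightarrow>
     (\<forall>u\<in>{1..N}. \<forall>v\<in>{1..N}. (u, v) \<in> {(x, y). adj E x y}\<^sup>*)"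

definition bipartite :: "nat \<Rightarrow> nat set set \<Rightarrow> bool" where
  "bipartite N E \<longleftrightarrow>
     (\<exists>c :: nat \<Rightarrow> bool. \<forall>u\<in>{1..N}. \<forall>v\<in>{1..N}. adj E u v \<longrightarrow> c u \<noteq> c v)"

definition nbr :: "nat \<Rightarrow> nat set set \<Rightarrow> nat \<Rightarrow> nat set" where
  "nbr N E u = {v \<in> {1..N}. u \<in> {1..N} \<and> (v = u \<or> adj E u v)}"

definition deg :: "nat \<Rightarrow> nat set set \<Rightarrow> nat \<Rightarrow> nat" where
  "deg N E u = card (nbr N E u)"

text \<open>A realisation of the random matrix Theta is a function theta u v (True = 1, False = 0).\<close>

definition zeta :: "nat \<Rightarrow> nat set set \<Rightarrow> (nat \<Rightarrow> nat \<Rightarrow> bool) \<Rightarrow> nat \<Rightarrow> nat" where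
  "zeta N E \<theta> u = (\<Sum>v\<in>nbr N E u. of_bool (\<theta> u v))"

definition drop_trans :: "nat \<Rightarrow> nat set set \<Rightarrow> (nat \<Rightarrow> nat \<Rightarrow> bool) \<Rightarrow> nat \<Rightarrow> nat \<Rightarrow> real" where
  "drop_trans N E \<theta> u v =
     (if zeta N E \<theta> u > 0 then of_bool (\<theta> u v) / real (zeta N E \<theta> u)
      else of_bool (v = u))"

definition Atilde :: "nat \<Rightarrow> nat set set \<Rightarrow> nat \<Rightarrow> nat \<Rightarrow> real" where
  "Atilde N E u v = of_bool (v \<in> nbr N E u)"

definition Gamma :: "nat \<Rightarrow> nat set set \<Rightarrow> nat \<Rightarrow> real" where
  "Gamma N E u = 1 / real (card E) ^ deg N E u"

definition Pdrop :: "nat \<Rightarrow> nat set set \<Rightarrow> nat \<Rightarrow> nat \<Rightarrow> real" where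
  "Pdrop N E u v =
     (1 - Gamma N E u) * (Atilde N E u v / real (deg N E u)) + Gamma N E u * of_bool (u = v)"

definition env_sigma :: "'a measure \<Rightarrow> (nat \<Rightarrow> 'a \<Rightarrow> nat \<Rightarrow> nat \<Rightarrow> bool) \<Rightarrow> 'a set set" where
  "env_sigma M \<Theta> =
     sigma_sets (space M) {{\<omega> \<in> space M. \<Theta> l \<omega> u v} | l u v. 1 \<le> l}"

end

theory Submission
  imports Defs
begin


lemma (in prob_space) integral_sum_ind:
  fixes g :: "'b \<Rightarrow> real"
  assumes "finite R" "\<And>c. c \<in> R \<Longrightarrow> A c \<in> sets M"
  shows "(\<integral>\<omega>. (\<Sum>c\<in>R. g c * indicator (A c) \<omega>) \<partial>M) = (\<Sum>c\<in>R. g c * prob (A c))"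
proof -
  have "(\<integral>\<omega>. (\<Sum>c\<in>R. g c * indicator (A c) \<omega>) \<partial>M) = (\<Sum>c\<in>R. (\<integral>\<omega>. g c * indicator (A c) \<omega> \<partial>M))"
    by (rule Bochner_Integration.integral_sum) (use assms in \<open>auto intro!: integrable_real_indicator simp: less_top[symmetric]\<close>)
  also have "\<dots> = (\<Sum>c\<in>R. g c * prob (A c))"
    using assms by (intro sum.cong refl) (simp add: Int_absorb2 sets.sets_into_space)
  finally show ?thesis .
qed

lemma (in prob_space) fin_integral:
  fixes f :: "'b \<Rightarrow> real"
  assumes R: "finite R" and X: "\<And>\<omega>. \<omega> \<in> space M \<Longrightarrow> X \<omega> \<in> R"
    and S: "\<And>c. c \<in> R \<Longrightarrow> {\<omega> \<in> space M. X \<omega> = c} \<in> sets M"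
  shows "(\<integral>\<omega>. f (X \<omega>) \<partial>M) = (\<Sum>c\<in>R. f c * prob {\<omega> \<in> space M. X \<omega> = c})"
proof -
  have "(\<integral>\<omega>. f (X \<omega>) \<partial>M) = (\<integral>\<omega>. (\<Sum>c\<in>R. f c * indicator {\<omega> \<in> space M. X \<omega> = c} \<omega>) \<partial>M)"
  proof (rule Bochner_Integration.integral_cong[OF refl])
    fix \<omega> assume w: "\<omega> \<in> space M"
    have "(\<Sum>c\<in>R. f c * indicator {\<omega> \<in> space M. X \<omega> = c} \<omega>) = (\<Sum>c\<in>R. if c = X \<omega> then f c else 0)"
      using w by (intro sum.cong refl) (auto simp: indicator_def)
    also have "\<dots> = f (X \<omega>)" using X[OF w] R by (simp add: sum.delta')
    finally show "f (X \<omega>) = (\<Sum>c\<in>R. f c * indicator {\<omega> \<in> space M. X \<omega> = c} \<omega>)" by simp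
  qed
  also have "\<dots> = (\<Sum>c\<in>R. f c * prob {\<omega> \<in> space M. X \<omega> = c})" by (rule integral_sum_ind[OF R S])
  finally show ?thesis .
qed

lemma (in prob_space) indep_simple:
  fixes X :: "'a \<Rightarrow> real"
  assumes R: "finite R" and X: "\<And>\<omega>. \<omega> \<in> space M \<Longrightarrow> X \<omega> \<in> R"
    and S: "\<And>c. c \<in> R \<Longrightarrow> {\<omega> \<in> space M. X \<omega> = c} \<in> sets M"
    and B: "B \<in> sets M"
    and I: "\<And>c. c \<in> R \<Longrightarrow> prob (B \<inter> {\<omega> \<in> space M. X \<omega> = c}) = prob B * prob {\<omega> \<in> space M. X \<omega> = c}"
  shows "(\<integral>\<omega>. indicator B \<omega> * X \<omega> \<partial>M) = prob B * (\<integral>\<omega>. X \<omega> \<partial>M)"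
proof -
  have "(\<integral>\<omega>. indicator B \<omega> * X \<omega> \<partial>M) = (\<integral>\<omega>. (\<Sum>c\<in>R. c * indicator (B \<inter> {\<omega> \<in> space M. X \<omega> = c}) \<omega>) \<partial>M)"
  proof (rule Bochner_Integration.integral_cong[OF refl])
    fix \<omega> assume w: "\<omega> \<in> space M"
    have "(\<Sum>c\<in>R. c * indicator (B \<inter> {\<omega> \<in> space M. X \<omega> = c}) \<omega>) = (\<Sum>c\<in>R. if c = X \<omega> then indicator B \<omega> * c else 0)"
      using w by (intro sum.cong refl) (auto simp: indicator_def)
    also have "\<dots> = indicator B \<omega> * X \<omega>" using X[OF w] R by (simp add: sum.delta')
    finally show "indicator B \<omega> * X \<omega> = (\<Sum>c\<in>R. c * indicator (B \<inter> {\<omega> \<in> space M. X \<omega> = c}) \<omega>)" by simp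
  qed
  also have "\<dots> = (\<Sum>c\<in>R. c * prob (B \<inter> {\<omega> \<in> space M. X \<omega> = c}))"
    by (rule integral_sum_ind) (use R S B in auto)
  also have "\<dots> = prob B * (\<Sum>c\<in>R. c * prob {\<omega> \<in> space M. X \<omega> = c})"
    by (simp add: I sum_distrib_left mult.left_commute)
  also have "(\<Sum>c\<in>R. c * prob {\<omega> \<in> space M. X \<omega> = c}) = (\<integral>\<omega>. X \<omega> \<partial>M)"
    using fin_integral[OF R X S, of "\<lambda>x. x"] by simp
  finally show ?thesis .
qed

lemma sym_sum:
  fixes f :: "bool \<Rightarrow> real" and Nb :: "nat set"
  assumes fin: "finite Nb" and uv: "u \<in> Nb" "v \<in> Nb"
  shows "(\<Sum>T\<in>Pow Nb. (if T \<noteq> {} then of_bool (v \<in> T) / real (card T) else 0) * (\<Prod>x\<in>Nb. f (x \<in> T)))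
       = (\<Sum>T\<in>Pow Nb. (if T \<noteq> {} then of_bool (u \<in> T) / real (card T) else 0) * (\<Prod>x\<in>Nb. f (x \<in> T)))"
proof -
  define t where "t x = (if x = u then v else if x = v then u else x)" for x
  have tt: "t (t x) = x" for x by (auto simp: t_def)
  have inj: "inj t" by (metis tt injI)
  have tmem: "x \<in> t ` T \<longleftrightarrow> t x \<in> T" for x T by (metis tt image_iff)
  have tN: "t x \<in> Nb \<longleftrightarrow> x \<in> Nb" for x using uv by (auto simp: t_def)
  have tNb: "t ` Nb = Nb" using tN tmem by blast
  show ?thesis
  proof (rule sum.reindex_bij_witness[where i="(`) t" and j="(`) t"])
    fix T assume "T \<in> Pow Nb"
    show "t ` t ` T = T" by (simp add: image_image tt)
    show "t ` T \<in> Pow Nb" using \<open>T \<in> Pow Nb\<close> tN by auto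
    have "(\<Prod>x\<in>Nb. f (x \<in> t ` T)) = (\<Prod>x\<in>Nb. f (t x \<in> T))" by (simp add: tmem)
    also have "\<dots> = (\<Prod>x\<in>Nb. f (x \<in> T))"
      by (rule prod.reindex_bij_witness[where i=t and j=t]) (auto simp: tt tN)
    finally have w: "(\<Prod>x\<in>Nb. f (x \<in> t ` T)) = (\<Prod>x\<in>Nb. f (x \<in> T))" .
    have c: "card (t ` T) = card T" using inj by (simp add: card_image inj_on_subset)
    have "t u = v" by (simp add: t_def)
    then have "u \<in> t ` T \<longleftrightarrow> v \<in> T" using tmem by simp
    then show "(if t ` T \<noteq> {} then of_bool (u \<in> t ` T) / real (card (t ` T)) else 0) * (\<Prod>x\<in>Nb. f (x \<in> t ` T))
      = (if T \<noteq> {} then of_bool (v \<in> T) / real (card T) else 0) * (\<Prod>x\<in>Nb. f (x \<in> T))"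
      using w c by simp
  qed (auto simp: image_image tt tN)
qed



lemma nbr_sub: "nbr N E u \<subseteq> {1..N}" by (auto simp: nbr_def)
lemma nbr_fin: "finite (nbr N E u)" by (rule finite_subset[OF nbr_sub]) simp
lemma nbr_self: "u \<in> {1..N} \<Longrightarrow> u \<in> nbr N E u" by (auto simp: nbr_def)

lemma (in prob_space) expect_drop:
  fixes \<theta> :: "'a \<Rightarrow> nat \<Rightarrow> nat \<Rightarrow> bool"
  assumes u: "u \<in> {1..N}"
    and meas: "\<theta> \<in> M \<rightarrow>\<^sub>M count_space UNIV"
    and off: "\<And>\<omega> v. \<omega> \<in> space M \<Longrightarrow> v \<notin> nbr N E u \<Longrightarrow> \<not> \<theta> \<omega> u v"
    and bern: "\<And>v. v \<in> nbr N E u \<Longrightarrow> prob {\<omega> \<in> space M. \<not> \<theta> \<omega> u v} = 1 / real (card E)"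
    and row: "indep_vars (\<lambda>_. count_space UNIV) (\<lambda>v \<omega>. \<theta> \<omega> u v) (nbr N E u)"
  shows "(\<integral>\<omega>. drop_trans N E (\<theta> \<omega>) u v \<partial>M) = Pdrop N E u v"
proof -
  define Nb where "Nb = nbr N E u"
  define p where "p = 1 / real (card E)"
  have fin: "finite Nb" unfolding Nb_def by (rule nbr_fin)
  have uN: "u \<in> Nb" unfolding Nb_def using u by (rule nbr_self)
  define d where "d = card Nb"
  have d1: "d \<ge> 1" unfolding d_def using fin uN by (simp add: Suc_le_eq card_gt_0_iff) blast
  define S where "S \<omega> = {x \<in> Nb. \<theta> \<omega> u x}" for \<omega>
  define H where "H T = (if T \<noteq> {} then of_bool (v \<in> T) / real (card T) else of_bool (v = u))" for T
  define K where "K (x::nat) T = (if T \<noteq> {} then of_bool (x \<in> T) / real (card T) else (0::real))" for x T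
  define w where "w T = (\<Prod>x\<in>Nb. (\<lambda>b. if b then 1 - p else p) (x \<in> T))" for T
  have pre: "(\<lambda>\<omega>. \<theta> \<omega> u x) -` Y \<inter> space M \<in> sets M" for x Y
  proof -
    have "(\<lambda>\<omega>. \<theta> \<omega> u x) -` Y \<inter> space M = \<theta> -` {f. f u x \<in> Y} \<inter> space M" by auto
    then show ?thesis using measurable_sets[OF meas, of "{f. f u x \<in> Y}"] by simp
  qed
  have dt: "drop_trans N E (\<theta> \<omega>) u v = H (S \<omega>)" if w: "\<omega> \<in> space M" for \<omega>
  proof -
    have z: "zeta N E (\<theta> \<omega>) u = card (S \<omega>)"
      unfolding zeta_def S_def Nb_def using nbr_fin
      by (simp add: Int_def conj_commute)
    have fS: "finite (S \<omega>)" using fin by (simp add: S_def)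
    have tv: "\<theta> \<omega> u v = (v \<in> S \<omega>)" using off[OF w, of v] by (auto simp: S_def Nb_def)
    show ?thesis unfolding drop_trans_def H_def z tv using fS by (simp add: card_gt_0_iff)
  qed
  have Seq: "{\<omega> \<in> space M. S \<omega> = T} = (\<Inter>x\<in>Nb. (\<lambda>\<omega>. \<theta> \<omega> u x) -` {x \<in> T} \<inter> space M)"
    if T: "T \<in> Pow Nb" for T
    using T uN by (auto simp: S_def)
  have Smeas: "{\<omega> \<in> space M. S \<omega> = T} \<in> sets M" if T: "T \<in> Pow Nb" for T
    unfolding Seq[OF T] using fin uN pre by (intro sets.finite_INT) auto
  have Sprob: "prob {\<omega> \<in> space M. S \<omega> = T} = w T" if T: "T \<in> Pow Nb" for T
  proof -
    have "prob {\<omega> \<in> space M. S \<omega> = T} = (\<Prod>x\<in>Nb. prob ((\<lambda>\<omega>. \<theta> \<omega> u x) -` {x \<in> T} \<inter> space M))"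
      unfolding Seq[OF T] using row fin uN unfolding Nb_def
      by (intro indep_varsD) auto
    also have "\<dots> = w T" unfolding w_def
    proof (intro prod.cong refl)
      fix x assume x: "x \<in> Nb"
      have cmp: "(\<lambda>\<omega>. \<theta> \<omega> u x) -` {True} \<inter> space M = space M - {\<omega> \<in> space M. \<not> \<theta> \<omega> u x}" by auto
      have cmp2: "(\<lambda>\<omega>. \<theta> \<omega> u x) -` {False} \<inter> space M = {\<omega> \<in> space M. \<not> \<theta> \<omega> u x}" by auto
      have b: "prob {\<omega> \<in> space M. \<not> \<theta> \<omega> u x} = p" using bern x unfolding Nb_def p_def by simp
      have m: "{\<omega> \<in> space M. \<not> \<theta> \<omega> u x} \<in> sets M" using pre[of x "{False}"] cmp2 by simp
      show "prob ((\<lambda>\<omega>. \<theta> \<omega> u x) -` {x \<in> T} \<inter> space M) = (if x \<in> T then 1 - p else p)"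
      proof (cases "x \<in> T")
        case True
        then show ?thesis using b cmp prob_compl[OF m] by simp
      next
        case False
        then show ?thesis using b cmp2 by simp
      qed
    qed
    finally show ?thesis .
  qed
  have Srange: "S \<omega> \<in> Pow Nb" for \<omega> by (auto simp: S_def)
  have finP: "finite (Pow Nb)" using fin by simp
  have int_gen: "(\<integral>\<omega>. f (S \<omega>) \<partial>M) = (\<Sum>T\<in>Pow Nb. f T * w T)" for f :: "nat set \<Rightarrow> real"
    using fin_integral[OF finP, of S f] Srange Smeas Sprob by simp
  have sumw: "(\<Sum>T\<in>Pow Nb. w T) = 1"
    using int_gen[of "\<lambda>_. 1"] prob_space by simp
  have w0: "w {} = p ^ d" by (simp add: w_def d_def)
  have wz: "(\<Sum>T\<in>Pow Nb. of_bool (T = {}) * w T) = w {}"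
  proof -
    have "(\<Sum>T\<in>Pow Nb. of_bool (T = {}) * w T) = (\<Sum>T\<in>{{}}. of_bool (T = {}) * w T)"
      by (rule sum.mono_neutral_right) (use fin in auto)
    then show ?thesis by simp
  qed
  have "(\<integral>\<omega>. drop_trans N E (\<theta> \<omega>) u v \<partial>M) = (\<integral>\<omega>. H (S \<omega>) \<partial>M)"
    by (rule Bochner_Integration.integral_cong) (auto simp: dt)
  also have "\<dots> = (\<Sum>T\<in>Pow Nb. H T * w T)" by (rule int_gen)
  also have "\<dots> = (\<Sum>T\<in>Pow Nb. K v T * w T + of_bool (v = u) * (of_bool (T = {}) * w T))"
    by (intro sum.cong refl) (auto simp: H_def K_def)
  also have "\<dots> = (\<Sum>T\<in>Pow Nb. K v T * w T) + of_bool (v = u) * p ^ d"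
  proof -
    have "(\<Sum>T\<in>Pow Nb. of_bool (T = {}) * w T) = (\<Sum>T\<in>{{}}. of_bool (T = {}) * w T)"
      by (rule sum.mono_neutral_right) (use fin in auto)
    then show ?thesis using w0 by (simp add: sum.distrib flip: sum_distrib_left)
  qed
  finally have e1: "(\<integral>\<omega>. drop_trans N E (\<theta> \<omega>) u v \<partial>M) = (\<Sum>T\<in>Pow Nb. K v T * w T) + of_bool (v = u) * p ^ d" .
  have symm: "(\<Sum>T\<in>Pow Nb. K x T * w T) = (\<Sum>T\<in>Pow Nb. K u T * w T)" if x: "x \<in> Nb" for x
    unfolding K_def w_def by (rule sym_sum[OF fin uN x])
  have "(\<Sum>x\<in>Nb. (\<Sum>T\<in>Pow Nb. K x T * w T)) = (\<Sum>T\<in>Pow Nb. (\<Sum>x\<in>Nb. K x T) * w T)"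
    by (subst sum.swap) (simp add: sum_distrib_right)
  also have "\<dots> = (\<Sum>T\<in>Pow Nb. (1 - of_bool (T = {})) * w T)"
  proof (intro sum.cong refl)
    fix T assume T: "T \<in> Pow Nb"
    have "finite T" using T fin finite_subset by auto
    moreover have "Nb \<inter> T = T" using T by auto
    ultimately show "(\<Sum>x\<in>Nb. K x T) * w T = (1 - of_bool (T = {})) * w T"
      unfolding K_def using fin by (auto simp: sum_divide_distrib[symmetric] Int_def card_gt_0_iff)
  qed
  also have "\<dots> = (\<Sum>T\<in>Pow Nb. w T) - (\<Sum>T\<in>Pow Nb. of_bool (T = {}) * w T)"
    by (simp add: left_diff_distrib sum_subtractf del: sum_mult_of_bool_eq sum_of_bool_mult_eq)
  also have "\<dots> = 1 - p ^ d" using wz w0 sumw by simp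
  finally have "(\<Sum>x\<in>Nb. (\<Sum>T\<in>Pow Nb. K x T * w T)) = 1 - p ^ d" .
  then have "real d * (\<Sum>T\<in>Pow Nb. K u T * w T) = 1 - p ^ d"
    using symm by (simp add: d_def)
  then have c: "(\<Sum>T\<in>Pow Nb. K u T * w T) = (1 - p ^ d) / real d" using d1 by (simp add: field_simps)
  have Kout: "(\<Sum>T\<in>Pow Nb. K v T * w T) = 0" if "v \<notin> Nb"
    using that by (intro sum.neutral) (auto simp: K_def)
  have G: "Gamma N E u = p ^ d" by (simp add: Gamma_def p_def d_def Nb_def deg_def power_one_over)
  show ?thesis
  proof (cases "v \<in> Nb")
    case True
    then show ?thesis using e1 symm[OF True] c G
      by (simp add: Pdrop_def Atilde_def Nb_def d_def deg_def)
  next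
    case False
    then have "v \<noteq> u" using uN by auto
    then show ?thesis using e1 Kout[OF False] False G
      by (simp add: Pdrop_def Atilde_def Nb_def)
  qed
qed



lemma drop_meas:
  assumes G: "G \<subseteq> Pow \<Omega>" and gen: "\<And>x y. {\<omega>\<in>\<Omega>. \<Theta> \<omega> x y} \<in> sigma_sets \<Omega> G"
  shows "(\<lambda>\<omega>. drop_trans N E (\<Theta> \<omega>) u v) \<in> borel_measurable (sigma \<Omega> G)"
proof -
  have [measurable]: "(\<lambda>\<omega>. \<Theta> \<omega> x y) \<in> measurable (sigma \<Omega> G) (count_space UNIV)" for x y
    unfolding pred_def space_measure_of_conv sets_measure_of[OF G] by (rule gen)
  show ?thesis unfolding drop_trans_def zeta_def by measurable
qed



theorem theorem8:
  fixes N :: nat and E :: "nat set set" and M :: "'a measure"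
    and \<Theta> :: "nat \<Rightarrow> 'a \<Rightarrow> nat \<Rightarrow> nat \<Rightarrow> bool"
    and V :: "nat \<Rightarrow> 'a \<Rightarrow> nat"
  assumes graph: "simple_graph N E"
    and conn: "connected_graph N E"
    and nonbip: "\<not> bipartite N E"
    and P: "prob_space M"
    and env_meas: "\<And>l. 1 \<le> l \<Longrightarrow> \<Theta> l \<in> M \<rightarrow>\<^sub>M count_space UNIV"
    and env_indep: "prob_space.indep_vars M (\<lambda>_. count_space UNIV) \<Theta> {1..}"
    and env_ident: "\<And>l. 1 \<le> l \<Longrightarrow>
        distr M (count_space UNIV) (\<Theta> l) = distr M (count_space UNIV) (\<Theta> 1)"
    and env_off: "\<And>l \<omega> u v. 1 \<le> l \<Longrightarrow> \<omega> \<in> space M \<Longrightarrow> v \<notin> nbr N E u \<Longrightarrow> \<not> \<Theta> l \<omega> u v"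
    and env_bern: "\<And>l u v. 1 \<le> l \<Longrightarrow> u \<in> {1..N} \<Longrightarrow> v \<in> nbr N E u \<Longrightarrow>
        measure M {\<omega> \<in> space M. \<not> \<Theta> l \<omega> u v} = 1 / real (card E)"
    and env_row: "\<And>l u. 1 \<le> l \<Longrightarrow> u \<in> {1..N} \<Longrightarrow>
        prob_space.indep_vars M (\<lambda>_. count_space UNIV) (\<lambda>v \<omega>. \<Theta> l \<omega> u v) (nbr N E u)"
    and V_meas: "\<And>l. V l \<in> M \<rightarrow>\<^sub>M count_space UNIV"
    and V_range: "\<And>l \<omega>. \<omega> \<in> space M \<Longrightarrow> V l \<omega> \<in> {1..N}"
    and V0_indep: "\<And>v A. A \<in> env_sigma M \<Theta> \<Longrightarrow>
        measure M ({\<omega> \<in> space M. V 0 \<omega> = v} \<inter> A)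
          = measure M {\<omega> \<in> space M. V 0 \<omega> = v} * measure M A"
    and MCRE: "\<And>l vs A. 1 \<le> l \<Longrightarrow> (\<forall>i\<le>l. vs i \<in> {1..N}) \<Longrightarrow> A \<in> env_sigma M \<Theta> \<Longrightarrow>
        measure M ({\<omega> \<in> space M. \<forall>i\<le>l. V i \<omega> = vs i} \<inter> A)
          = (\<integral>\<omega>. indicator ({\<omega> \<in> space M. \<forall>i<l. V i \<omega> = vs i} \<inter> A) \<omega>
                    * drop_trans N E (\<Theta> l \<omega>) (vs (l - 1)) (vs l) \<partial>M)"
  shows "\<forall>l\<ge>1. \<forall>vs. (\<forall>i\<le>l. vs i \<in> {1..N}) \<longrightarrow>
           measure M {\<omega> \<in> space M. \<forall>i\<le>l. V i \<omega> = vs i}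
             = measure M {\<omega> \<in> space M. \<forall>i<l. V i \<omega> = vs i} * Pdrop N E (vs (l - 1)) (vs l)"
proof -
  interpret prob_space M by (rule P)
  define G where "G k = {{\<omega> \<in> space M. \<Theta> j \<omega> x y} | j x y. k < j}" for k :: nat
  define F where "F k = sigma_sets (space M) (G k)" for k
  define Mk where "Mk k = sigma (space M) (G k)" for k
  define g where "g l x y \<omega> = drop_trans N E (\<Theta> l \<omega>) x y" for l x y \<omega>
  define B where "B k vs = {\<omega> \<in> space M. \<forall>i\<le>k. V i \<omega> = vs i}" for k vs
  define Rg where "Rg = insert (0::real) (insert 1 ((\<lambda>n. 1 / real n) ` {..N}))"
  have genm: "{\<omega> \<in> space M. \<Theta> j \<omega> x y} \<in> sets M" if "1 \<le> j" for j x y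
  proof -
    have "{\<omega> \<in> space M. \<Theta> j \<omega> x y} = \<Theta> j -` {f. f x y} \<inter> space M" by auto
    then show ?thesis using measurable_sets[OF env_meas[OF that], of "{f. f x y}"] by simp
  qed
  have Gpow: "G k \<subseteq> Pow (space M)" for k by (auto simp: G_def)
  have Gsets: "G k \<subseteq> sets M" for k using genm by (auto simp: G_def)
  have Fsets: "F k \<subseteq> sets M" for k unfolding F_def by (rule sets.sigma_sets_subset[OF Gsets])
  have Fenv: "F k \<subseteq> env_sigma M \<Theta>" for k unfolding F_def env_sigma_def
    by (rule sigma_sets_mono') (force simp: G_def)
  have Fmono: "F (Suc k) \<subseteq> F k" for k unfolding F_def by (rule sigma_sets_mono') (force simp: G_def)
  have Mk_sets: "sets (Mk k) = F k" for k unfolding Mk_def F_def by (rule sets_measure_of[OF Gpow])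
  have Mk_space: "space (Mk k) = space M" for k unfolding Mk_def by (rule space_measure_of_conv)
  have gmeas: "g l x y \<in> borel_measurable (Mk k)" if "k < l" for k l x y
    unfolding Mk_def g_def
  proof (rule drop_meas[OF Gpow])
    fix a b show "{\<omega> \<in> space M. \<Theta> l \<omega> a b} \<in> sigma_sets (space M) (G k)"
      using that by (auto simp: G_def)
  qed
  have grange: "g l x y \<omega> \<in> Rg" for l x y \<omega>
  proof -
    have "zeta N E (\<Theta> l \<omega>) x = card (nbr N E x \<inter> {v. \<Theta> l \<omega> x v})"
      unfolding zeta_def using nbr_fin by simp
    also have "\<dots> \<le> card (nbr N E x)" by (rule card_mono[OF nbr_fin]) auto
    also have "\<dots> \<le> card {1..N}" by (rule card_mono[OF _ nbr_sub]) simp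
    finally have "zeta N E (\<Theta> l \<omega>) x \<le> N" by simp
    then show ?thesis unfolding g_def drop_trans_def Rg_def by auto
  qed
  have Rfin: "finite Rg" by (simp add: Rg_def)
  have level: "{\<omega> \<in> space M. f \<omega> = c} \<in> F k" if f: "f \<in> borel_measurable (Mk k)" for f :: "'a \<Rightarrow> real" and k c
  proof -
    have c: "{c} \<in> sets borel" by (rule borel_closed) simp
    have "f -` {c} \<inter> space (Mk k) \<in> sets (Mk k)" by (rule measurable_sets[OF f c])
    moreover have "f -` {c} \<inter> space (Mk k) = {\<omega> \<in> space M. f \<omega> = c}" by (auto simp: Mk_space)
    ultimately show ?thesis by (simp add: Mk_sets)
  qed
  have Bmeas: "B k vs \<in> sets M" for k vs
  proof -
    have "B k vs = (\<Inter>i\<in>{..k}. V i -` {vs i} \<inter> space M)" by (auto simp: B_def)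
    moreover have "V i -` {vs i} \<inter> space M \<in> sets M" for i using measurable_sets[OF V_meas] by simp
    ultimately show ?thesis by (metis (no_types, lifting) sets.finite_INT finite_atMost atMost_iff le0 empty_iff)
  qed
  have envind: "prob (A \<inter> (\<Theta> l -` Y \<inter> space M)) = prob A * prob (\<Theta> l -` Y \<inter> space M)"
    if l: "1 \<le> l" and A: "A \<in> F l" for l A Y
  proof -
    define EE where "EE i = {\<Theta> i -` Z \<inter> space M | Z. Z \<in> sets (count_space UNIV)}" for i
    have ind: "indep_sets EE {1..}" using env_indep unfolding indep_vars_def2 EE_def by simp
    define II where "II b = (if b then {l} else {Suc l..})" for b :: bool
    have "indep_sets (\<lambda>b. sigma_sets (space M) (\<Union>i\<in>II b. EE i)) UNIV"
    proof (rule indep_sets_collect_sigma)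
      show "indep_sets EE (\<Union>b\<in>UNIV. II b)"
        by (rule indep_sets_mono_index[OF _ ind]) (use l in \<open>auto simp: II_def\<close>)
      show "Int_stable (EE i)" for i
        unfolding Int_stable_def EE_def
      proof (intro ballI)
        fix a b assume "a \<in> {\<Theta> i -` Z \<inter> space M |Z. Z \<in> sets (count_space UNIV)}"
          "b \<in> {\<Theta> i -` Z \<inter> space M |Z. Z \<in> sets (count_space UNIV)}"
        then obtain Z1 Z2 where "a = \<Theta> i -` Z1 \<inter> space M" "b = \<Theta> i -` Z2 \<inter> space M" by auto
        then have "a \<inter> b = \<Theta> i -` (Z1 \<inter> Z2) \<inter> space M \<and> Z1 \<inter> Z2 \<in> sets (count_space UNIV)" by auto
        then show "a \<inter> b \<in> {\<Theta> i -` Z \<inter> space M |Z. Z \<in> sets (count_space UNIV)}"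
          by (intro CollectI exI[of _ "Z1 \<inter> Z2"]) simp
      qed
      show "disjoint_family_on II UNIV"
        unfolding disjoint_family_on_def II_def by auto
    qed
    moreover have "A \<in> sigma_sets (space M) (\<Union>i\<in>II False. EE i)"
    proof -
      have "G l \<subseteq> (\<Union>i\<in>II False. EE i)"
      proof
        fix S assume "S \<in> G l"
        then obtain j x y where S: "S = {\<omega> \<in> space M. \<Theta> j \<omega> x y}" "l < j" by (auto simp: G_def)
        then have "S = \<Theta> j -` {f. f x y} \<inter> space M" by auto
        then have "S \<in> EE j" unfolding EE_def by (intro CollectI exI[of _ "{f. f x y}"]) simp
        then show "S \<in> (\<Union>i\<in>II False. EE i)" using S(2) unfolding II_def by auto
      qed
      then show ?thesis using A unfolding F_def by (meson sigma_sets_mono' subsetD)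
    qed
    moreover have "\<Theta> l -` Y \<inter> space M \<in> sigma_sets (space M) (\<Union>i\<in>II True. EE i)"
      by (rule sigma_sets.Basic) (auto simp: II_def EE_def)
    ultimately have "prob (\<Inter>b\<in>UNIV. (\<lambda>b. if b then \<Theta> l -` Y \<inter> space M else A) b)
        = (\<Prod>b\<in>UNIV. prob ((\<lambda>b. if b then \<Theta> l -` Y \<inter> space M else A) b))"
      by (intro indep_setsD) auto
    then show ?thesis by (simp add: UNIV_bool Int_commute)
  qed
  have Eg: "(\<integral>\<omega>. g l x y \<omega> \<partial>M) = Pdrop N E x y" if l: "1 \<le> l" and x: "x \<in> {1..N}" for l x y
    unfolding g_def
    by (rule expect_drop[OF x env_meas[OF l] env_off[OF l] env_bern[OF l x] env_row[OF l x]])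
  have key: "prob (B (Suc k) vs \<inter> A') = prob (B k vs) * (\<integral>\<omega>. indicator A' \<omega> * g (Suc k) (vs k) (vs (Suc k)) \<omega> \<partial>M)"
    if IH: "\<forall>vs A. A \<in> F k \<longrightarrow> prob (B k vs \<inter> A) = prob (B k vs) * prob A"
      and vs: "\<forall>i\<le>Suc k. vs i \<in> {1..N}" and A': "A' \<in> F (Suc k)" for k vs A'
  proof -
    have A'env: "A' \<in> env_sigma M \<Theta>" using A' Fenv by auto
    have A'F: "A' \<in> F k" using A' Fmono by auto
    have eqB: "{\<omega> \<in> space M. \<forall>i\<le>Suc k. V i \<omega> = vs i} = B (Suc k) vs" by (simp add: B_def)
    have eqB': "{\<omega> \<in> space M. \<forall>i<Suc k. V i \<omega> = vs i} = B k vs" by (auto simp: B_def less_Suc_eq_le)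
    have "prob (B (Suc k) vs \<inter> A') = (\<integral>\<omega>. indicator (B k vs \<inter> A') \<omega> * g (Suc k) (vs k) (vs (Suc k)) \<omega> \<partial>M)"
      using MCRE[of "Suc k" vs A'] vs A'env by (simp add: eqB eqB' g_def)
    also have "\<dots> = (\<integral>\<omega>. indicator (B k vs) \<omega> * (indicator A' \<omega> * g (Suc k) (vs k) (vs (Suc k)) \<omega>) \<partial>M)"
      by (simp add: indicator_inter_arith mult.assoc)
    also have "\<dots> = prob (B k vs) * (\<integral>\<omega>. indicator A' \<omega> * g (Suc k) (vs k) (vs (Suc k)) \<omega> \<partial>M)"
    proof (rule indep_simple[OF Rfin])
      let ?X = "\<lambda>\<omega>. indicator A' \<omega> * g (Suc k) (vs k) (vs (Suc k)) \<omega> :: real"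
      show "?X \<omega> \<in> Rg" for \<omega>
        using grange[of "Suc k" "vs k" "vs (Suc k)" \<omega>] by (auto simp: indicator_def Rg_def)
      have Xm: "?X \<in> borel_measurable (Mk k)"
        by (intro borel_measurable_times borel_measurable_indicator gmeas) (auto simp: Mk_sets A'F)
      have XF: "{\<omega> \<in> space M. ?X \<omega> = c} \<in> F k" for c by (rule level[OF Xm])
      show "{\<omega> \<in> space M. ?X \<omega> = c} \<in> sets M" for c using XF Fsets by auto
      show "B k vs \<in> sets M" by (rule Bmeas)
      show "prob (B k vs \<inter> {\<omega> \<in> space M. ?X \<omega> = c}) = prob (B k vs) * prob {\<omega> \<in> space M. ?X \<omega> = c}" for c
        by (rule IH[rule_format, OF XF])
    qed
    finally show ?thesis .
  qed
  have keyS: "prob (B (Suc k) vs) = prob (B k vs) * (\<integral>\<omega>. g (Suc k) (vs k) (vs (Suc k)) \<omega> \<partial>M)"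
    if IH: "\<forall>vs A. A \<in> F k \<longrightarrow> prob (B k vs \<inter> A) = prob (B k vs) * prob A"
      and vs: "\<forall>i\<le>Suc k. vs i \<in> {1..N}" for k vs
  proof -
    have sp: "space M \<in> F (Suc k)" unfolding F_def by (rule sigma_sets_top)
    have i1: "(\<integral>\<omega>. indicator (space M) \<omega> * g (Suc k) (vs k) (vs (Suc k)) \<omega> \<partial>M) = (\<integral>\<omega>. g (Suc k) (vs k) (vs (Suc k)) \<omega> \<partial>M)"
      by (rule Bochner_Integration.integral_cong) auto
    have i2: "B (Suc k) vs \<inter> space M = B (Suc k) vs" unfolding B_def by (rule Int_absorb2) blast
    have "prob (B (Suc k) vs \<inter> space M) = prob (B k vs) * (\<integral>\<omega>. indicator (space M) \<omega> * g (Suc k) (vs k) (vs (Suc k)) \<omega> \<partial>M)"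
      by (rule key[OF IH vs sp])
    then show ?thesis by (simp only: i1 i2)
  qed
  have Ind: "\<forall>vs A. A \<in> F k \<longrightarrow> prob (B k vs \<inter> A) = prob (B k vs) * prob A" for k
  proof (induction k)
    case 0
    show ?case
    proof (intro allI impI)
      fix vs A assume A: "A \<in> F 0"
      have "B 0 vs = {\<omega> \<in> space M. V 0 \<omega> = vs 0}" by (auto simp: B_def)
      then show "prob (B 0 vs \<inter> A) = prob (B 0 vs) * prob A" using V0_indep[of A "vs 0"] A Fenv by auto
    qed
  next
    case (Suc k)
    show ?case
    proof (intro allI impI)
      fix vs A assume A: "A \<in> F (Suc k)"
      have AF: "A \<in> F k" using A Fmono by auto
      have AM: "A \<in> sets M" using AF Fsets by auto
      show "prob (B (Suc k) vs \<inter> A) = prob (B (Suc k) vs) * prob A"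
      proof (cases "\<forall>i\<le>Suc k. vs i \<in> {1..N}")
        case False
        then obtain i where i: "i \<le> Suc k" "vs i \<notin> {1..N}" by auto
        have "B (Suc k) vs = {}"
        proof (rule ccontr)
          assume "B (Suc k) vs \<noteq> {}"
          then obtain \<omega> where "\<omega> \<in> B (Suc k) vs" by auto
          then show False using i V_range[of \<omega> i] by (auto simp: B_def)
        qed
        then show ?thesis by simp
      next
        case True
        have Eind: "(\<integral>\<omega>. indicator A \<omega> * g (Suc k) a b \<omega> \<partial>M) = prob A * (\<integral>\<omega>. g (Suc k) a b \<omega> \<partial>M)" for a b
        proof (rule indep_simple[OF Rfin])
          show "g (Suc k) a b \<omega> \<in> Rg" for \<omega> by (rule grange)
          have gF: "{\<omega> \<in> space M. g (Suc k) a b \<omega> = c} \<in> F k" for c by (rule level[OF gmeas]) simp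
          show "{\<omega> \<in> space M. g (Suc k) a b \<omega> = c} \<in> sets M" for c using gF Fsets by auto
          show "A \<in> sets M" by (rule AM)
          show "prob (A \<inter> {\<omega> \<in> space M. g (Suc k) a b \<omega> = c}) = prob A * prob {\<omega> \<in> space M. g (Suc k) a b \<omega> = c}" for c
          proof -
            have "{\<omega> \<in> space M. g (Suc k) a b \<omega> = c} = \<Theta> (Suc k) -` {\<theta>. drop_trans N E \<theta> a b = c} \<inter> space M"
              by (auto simp: g_def)
            moreover have "prob (A \<inter> (\<Theta> (Suc k) -` {\<theta>. drop_trans N E \<theta> a b = c} \<inter> space M)) = prob A * prob (\<Theta> (Suc k) -` {\<theta>. drop_trans N E \<theta> a b = c} \<inter> space M)"
              by (rule envind) (use A in auto)
            ultimately show ?thesis by (simp only:)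
          qed
        qed
        show ?thesis using key[OF Suc.IH True A] keyS[OF Suc.IH True] Eind by simp
      qed
    qed
  qed
  show ?thesis
  proof (intro allI impI)
    fix l :: nat and vs :: "nat \<Rightarrow> nat" assume l: "1 \<le> l" and vs: "\<forall>i\<le>l. vs i \<in> {1..N}"
    obtain k where k: "l = Suc k" using l by (cases l) auto
    have eqB: "{\<omega> \<in> space M. \<forall>i\<le>l. V i \<omega> = vs i} = B (Suc k) vs" by (simp add: B_def k)
    have eqB': "{\<omega> \<in> space M. \<forall>i<l. V i \<omega> = vs i} = B k vs" by (auto simp: B_def less_Suc_eq_le k)
    have "prob (B (Suc k) vs) = prob (B k vs) * Pdrop N E (vs k) (vs (Suc k))"
      using keyS[OF Ind] vs Eg[of "Suc k" "vs k" "vs (Suc k)"] by (simp add: k)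
    then show "prob {\<omega> \<in> space M. \<forall>i\<le>l. V i \<omega> = vs i} = prob {\<omega> \<in> space M. \<forall>i<l. V i \<omega> = vs i} * Pdrop N E (vs (l - 1)) (vs l)"
      unfolding eqB eqB' by (simp add: k)
  qed
qed

end
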